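(* Let $B>0$, and let $U:\mathbb{R}^3\to[0,\infty[$ with $U\in\mathrm{L}^1(\mathbb{R}^3)\cap\mathrm{L}^2(\mathbb{R}^3)$ satisfy $\lim_{|x|\to\infty}\|(|x_\perp|^\alpha,|x_3|^\gamma)\|_{2/\beta}\,U(x_\perp,x_3)=g$ for constants $g>0$, $\alpha>2$, $\beta>0$, $\alpha/(\alpha-2)<\gamma<3\alpha/(\alpha-2)$. Let $u(x):=g\,\big(|x_\perp|^{2\alpha/\beta}+|x_3|^{2\gamma/\beta}\big)^{-\beta/2}$ for $x\neq0$. Let $\varphi\in\mathcal{C}_c^\infty(\mathbb{R})$ be real-valued with $\int_{\mathbb{R}}|\varphi(s)|^2ds=1$ and $\int_{\mathbb{R}}s|\varphi(s)|^2ds=0$, let $0\le\sigma<1/\gamma$, and for $t>0$ define \[ \psi_t(x):=\sqrt{\tfrac{B}{2\pi}}\,e^{-\frac B4|x_\perp|^2}\,t^{-\sigma/2}\,\varphi\!\left(\tfrac{x_3}{t^\sigma}\right),\qquad \delta_t(x):=t^{\frac2\alpha+\frac1\gamma}\left|\psi_t\!\left(t^{\frac1\alpha}x_\perp,t^{\frac1\gamma}x_3\right)\right|^2 . \] Then for every $x\in\mathbb{R}^3\setminus\{0\}$, \[ \limsup_{t\to\infty}\,t\int_{\mathbb{R}^3}dy\,\delta_t(x-y)\,U\!\left(t^{\frac1\alpha}y_\perp,t^{\frac1\gamma}y_3\right)\le u(x). \]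
   Context: Notation: for $x=(x_1,x_2,x_3)\in\mathbb{R}^3$, $x_\perp:=(x_1,x_2)$; for $c=(c_1,c_2)\in\mathbb{R}^2$, $\|c\|_{2/\beta}:=(|c_1|^{2/\beta}+|c_2|^{2/\beta})^{\beta/2}$. Each $\delta_t$ is a probability density on $\mathbb{R}^3$. *)

theory Defs
  imports "HOL-Analysis.Analysis"
begin

definition perp_norm :: "real^3 \<Rightarrow> real" where
  "perp_norm x = sqrt ((x$1)^2 + (x$2)^2)"

definition aniso_scale :: "real \<Rightarrow> real \<Rightarrow> real^3 \<Rightarrow> real^3" where
  "aniso_scale a c x = (\<chi> i. if i = 3 then c * x$i else a * x$i)"

definition pnorm2 :: "real \<Rightarrow> real \<Rightarrow> real \<Rightarrow> real" where
  "pnorm2 \<beta> c1 c2 = (\<bar>c1\<bar> powr (2/\<beta>) + \<bar>c2\<bar> powr (2/\<beta>)) powr (\<beta>/2)"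

definition smooth_real :: "(real \<Rightarrow> real) \<Rightarrow> bool" where
  "smooth_real f \<longleftrightarrow> (\<forall>n. \<forall>x. ((deriv ^^ n) f) differentiable (at x))"

definition compact_support :: "(real \<Rightarrow> real) \<Rightarrow> bool" where
  "compact_support f \<longleftrightarrow> compact (closure {s. f s \<noteq> 0})"

definition psi :: "real \<Rightarrow> real \<Rightarrow> (real \<Rightarrow> real) \<Rightarrow> real \<Rightarrow> real^3 \<Rightarrow> real" where
  "psi B \<sigma> \<phi> t x = sqrt (B / (2*pi)) * exp (- (B/4) * (perp_norm x)^2)
      * t powr (-\<sigma>/2) * \<phi> (x$3 / t powr \<sigma>)"

definition delta :: "real \<Rightarrow> real \<Rightarrow> real \<Rightarrow> real \<Rightarrow> (real \<Rightarrow> real) \<Rightarrow> real \<Rightarrow> real^3 \<Rightarrow> real" where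
  "delta \<alpha> \<gamma> B \<sigma> \<phi> t x = t powr (2/\<alpha> + 1/\<gamma>)
      * \<bar>psi B \<sigma> \<phi> t (aniso_scale (t powr (1/\<alpha>)) (t powr (1/\<gamma>)) x)\<bar>^2"

definition u_lim :: "real \<Rightarrow> real \<Rightarrow> real \<Rightarrow> real \<Rightarrow> real^3 \<Rightarrow> real" where
  "u_lim g \<alpha> \<beta> \<gamma> x = g * ((perp_norm x) powr (2*\<alpha>/\<beta>) + \<bar>x$3\<bar> powr (2*\<gamma>/\<beta>)) powr (-\<beta>/2)"

end

theory Submission
  imports Defs "HOL-Probability.Probability" "HOL-Real_Asymp.Real_Asymp"
begin


lemma basis3: "(Basis :: (real^3) set) = {axis 1 1, axis 2 1, axis 3 1}"
  by (auto simp: Basis_vec_def UNIV_3)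

lemma axis_neq3: "axis (1::3) (1::real) \<noteq> axis 2 1" "axis (1::3) (1::real) \<noteq> axis 3 1" "axis (2::3) (1::real) \<noteq> axis 3 1"
  by (auto simp: axis_eq_axis)

lemma nn_prod3:
  fixes f1 f2 f3 :: "real \<Rightarrow> real"
  assumes [measurable]: "f1 \<in> borel_measurable borel" "f2 \<in> borel_measurable borel" "f3 \<in> borel_measurable borel"
  assumes "\<And>s. f1 s \<ge> 0" "\<And>s. f2 s \<ge> 0" "\<And>s. f3 s \<ge> 0"
  shows "(\<integral>\<^sup>+y. ennreal (f1 ((y::real^3)$1) * f2 (y$2) * f3 (y$3)) \<partial>lborel)
     = (\<integral>\<^sup>+s. ennreal (f1 s) \<partial>lborel) * (\<integral>\<^sup>+s. ennreal (f2 s) \<partial>lborel) * (\<integral>\<^sup>+s. ennreal (f3 s) \<partial>lborel)"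
proof -
  define f where "f = (\<lambda>b::real^3. if b = axis 1 1 then (\<lambda>s. ennreal (f1 s)) else if b = axis 2 1 then (\<lambda>s. ennreal (f2 s)) else (\<lambda>s. ennreal (f3 s)))"
  have m: "\<And>b. b \<in> Basis \<Longrightarrow> f b \<in> borel_measurable borel" unfolding f_def by auto
  have "(\<integral>\<^sup>+y. (\<Prod>b\<in>Basis. f b (y \<bullet> b)) \<partial>lborel) = (\<Prod>b\<in>Basis. (\<integral>\<^sup>+x. f b x \<partial>lborel))"
    by (rule nn_integral_lborel_prod[OF m]) auto
  moreover have "\<And>y. (\<Prod>b\<in>Basis. f b (y \<bullet> b)) = ennreal (f1 (y$1) * f2 (y$2) * f3 (y$3))"
    unfolding basis3 using axis_neq3
    by (simp add: f_def cart_eq_inner_axis[symmetric] ennreal_mult' assms mult.assoc del: inner_axis)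
  moreover have "(\<Prod>b\<in>Basis. (\<integral>\<^sup>+x. f b x \<partial>lborel)) = (\<integral>\<^sup>+s. ennreal (f1 s) \<partial>lborel) * (\<integral>\<^sup>+s. ennreal (f2 s) \<partial>lborel) * (\<integral>\<^sup>+s. ennreal (f3 s) \<partial>lborel)"
    unfolding basis3 using axis_neq3 by (simp add: f_def mult.assoc)
  ultimately show ?thesis by simp
qed

lemma aniso_comp[simp]:
  "aniso_scale a c y $ 1 = a * y$1" "aniso_scale a c y $ 2 = a * y$2" "aniso_scale a c y $ 3 = c * y$3"
  by (auto simp: aniso_scale_def)

lemma nn_scale3:
  fixes U :: "real^3 \<Rightarrow> real"
  assumes [measurable]: "U \<in> borel_measurable borel" and a: "a > 0" and c: "c > 0"
  shows "(\<integral>\<^sup>+y. ennreal (U y) \<partial>lborel) = ennreal (a*a*c) * (\<integral>\<^sup>+y. ennreal (U (aniso_scale a c y)) \<partial>lborel)"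
proof -
  define cc where "cc = (\<lambda>j::real^3. if j = axis 3 1 then c else a)"
  define T where "T = (\<lambda>x. 0 + (\<Sum>j\<in>Basis. (cc j * (x \<bullet> j)) *\<^sub>R j))"
  have T: "T = aniso_scale a c"
  proof
    fix x :: "real^3"
    have "T x = (cc (axis 1 1) * (x \<bullet> axis 1 1)) *\<^sub>R axis 1 1 + ((cc (axis 2 1) * (x \<bullet> axis 2 1)) *\<^sub>R axis 2 1
       + (cc (axis 3 1) * (x \<bullet> axis 3 1)) *\<^sub>R axis 3 1)"
      unfolding T_def basis3 using axis_neq3 by simp
    also have "\<dots> = aniso_scale a c x"
      unfolding inner_axis using axis_neq3 by (simp add: cc_def vec_eq_iff forall_3 aniso_scale_def axis_def)
    finally show "T x = aniso_scale a c x" .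
  qed
  have pr: "(\<Prod>j\<in>Basis. \<bar>cc j\<bar>) = a*a*c"
    unfolding basis3 using axis_neq3 a c by (simp add: cc_def)
  have "lborel = density (distr lborel borel T) (\<lambda>_. (\<Prod>j\<in>Basis. \<bar>cc j\<bar>))"
    unfolding T_def by (rule lborel_affine_euclidean) (use a c in \<open>auto simp: cc_def\<close>)
  then have L: "lborel = density (distr lborel borel (aniso_scale a c)) (\<lambda>_. ennreal (a*a*c))"
    using T pr by simp
  have mT[measurable]: "aniso_scale a c \<in> borel_measurable borel"
    unfolding T[symmetric] T_def by measurable
  show ?thesis
    by (subst L) (simp add: nn_integral_density nn_integral_distr nn_integral_cmult)
qed

lemma delta_eq:
  assumes t: "t > 0" and B: "B > 0"
  shows "delta \<alpha> \<gamma> B \<sigma> \<phi> t z = t powr (2/\<alpha>) * t powr (1/\<gamma>) * (B/(2*pi))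
     * exp (-(B/2) * t powr (2/\<alpha>) * ((z$1)^2 + (z$2)^2)) * t powr (-\<sigma>)
     * (\<phi> (t powr (1/\<gamma>) * z$3 / t powr \<sigma>))^2"
proof -
  let ?a = "t powr (1/\<alpha>)" and ?c = "t powr (1/\<gamma>)"
  have e1: "t powr (2/\<alpha> + 1/\<gamma>) = t powr (2/\<alpha>) * ?c" by (simp add: powr_add)
  have e2: "?a ^ 2 = t powr (2/\<alpha>)" using t by (simp add: powr_powr[symmetric] power2_eq_square powr_add[symmetric])
  have e3: "(t powr (-\<sigma>/2))^2 = t powr (-\<sigma>)" using t by (simp add: power2_eq_square powr_add[symmetric])
  have e4: "(exp (- (B/4) * v))^2 = exp (-(B/2) * v)" for v
    by (simp add: power2_eq_square exp_add[symmetric])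
  have e5: "(sqrt (B / (2*pi)))^2 = B/(2*pi)" using B by simp
  have p2: "(perp_norm (aniso_scale ?a ?c z))^2 = t powr (2/\<alpha>) * ((z$1)^2 + (z$2)^2)"
    unfolding perp_norm_def by (simp add: power_mult_distrib e2[symmetric] algebra_simps)
  show ?thesis
    unfolding delta_def psi_def power2_abs
    by (simp only: power_mult_distrib e1 e3 e4 e5 p2) (simp add: algebra_simps)
qed

lemma mass:
  fixes \<phi> :: "real \<Rightarrow> real" and x :: "real^3"
  assumes t: "t > 0" and B: "B > 0"
    and phim[measurable]: "\<phi> \<in> borel_measurable borel"
    and phin: "(\<integral>\<^sup>+s. ennreal ((\<phi> s)^2) \<partial>lborel) = 1"
  shows "(\<integral>\<^sup>+y. ennreal (delta \<alpha> \<gamma> B \<sigma> \<phi> t (x - y)) \<partial>lborel) = 1"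
proof -
  define a2 where "a2 = t powr (2/\<alpha>)"
  define c where "c = t powr (1/\<gamma>)"
  define s0 where "s0 = 1 / sqrt (a2 * B)"
  define H where "H = (\<lambda>v. c * t powr (-\<sigma>) * (\<phi> (c * (x$3 - v) / t powr \<sigma>))^2)"
  have a2: "a2 > 0" and c: "c > 0" using t by (auto simp: a2_def c_def)
  have s0: "s0 > 0" using a2 B by (simp add: s0_def)
  have nd: "normal_density \<mu> s0 v = sqrt (a2 * B / (2*pi)) * exp (-(B/2) * a2 * (v - \<mu>)^2)" for \<mu> v
  proof -
    have q: "s0^2 = 1/(a2*B)" using a2 B by (simp add: s0_def power_divide)
    have r1: "1 / sqrt (2 * pi * s0^2) = sqrt (a2 * B / (2*pi))"
      unfolding q using a2 B by (simp add: real_sqrt_divide real_sqrt_mult field_simps)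
    have r2: "- ((v - \<mu>)^2) / (2 * s0^2) = -(B/2) * a2 * (v - \<mu>)^2"
      unfolding q using a2 B by (simp add: field_simps)
    show ?thesis unfolding normal_density_def r1 r2 ..
  qed
  have "\<And>y. delta \<alpha> \<gamma> B \<sigma> \<phi> t (x - y) = normal_density (x$1) s0 (y$1) * normal_density (x$2) s0 (y$2) * H (y$3)"
  proof -
    fix y :: "real^3"
    have sq: "sqrt (a2 * B / (2*pi)) * sqrt (a2 * B / (2*pi)) = a2 * B / (2*pi)"
      using a2 B by simp
    show "delta \<alpha> \<gamma> B \<sigma> \<phi> t (x - y) = normal_density (x$1) s0 (y$1) * normal_density (x$2) s0 (y$2) * H (y$3)"
      unfolding delta_eq[OF t B] H_def a2_def[symmetric] c_def[symmetric]
    proof -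
      have np: "normal_density (x$1) s0 (y$1) * normal_density (x$2) s0 (y$2)
          = a2 * B / (2*pi) * exp (-(B/2) * a2 * ((x$1 - y$1)^2 + (x$2 - y$2)^2))"
        unfolding nd
        by (simp add: power2_commute[of "y$1"] power2_commute[of "y$2"] exp_add[symmetric] algebra_simps)
          (subst mult.assoc[symmetric], use a2 B in simp)
      show "a2 * c * (B / (2 * pi)) * exp (- (B / 2) * a2 * (((x - y) $ 1)\<^sup>2 + ((x - y) $ 2)\<^sup>2)) * t powr - \<sigma> *
    (\<phi> (c * (x - y) $ 3 / t powr \<sigma>))\<^sup>2 =
    normal_density (x $ 1) s0 (y $ 1) * normal_density (x $ 2) s0 (y $ 2) *
    (c * t powr - \<sigma> * (\<phi> (c * (x $ 3 - y $ 3) / t powr \<sigma>))\<^sup>2)"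
        unfolding np by (simp add: algebra_simps)
    qed
  qed
  then have "(\<integral>\<^sup>+y. ennreal (delta \<alpha> \<gamma> B \<sigma> \<phi> t (x - y)) \<partial>lborel) =
     (\<integral>\<^sup>+s. ennreal (normal_density (x$1) s0 s) \<partial>lborel) * (\<integral>\<^sup>+s. ennreal (normal_density (x$2) s0 s) \<partial>lborel) * (\<integral>\<^sup>+ s. ennreal (H s) \<partial>lborel)"
    by (simp only:) (rule nn_prod3, auto simp: H_def, use c in simp)
  moreover have nd1: "(\<integral>\<^sup>+s. ennreal (normal_density \<mu> s0 s) \<partial>lborel) = 1" for \<mu>
    using s0 by (subst nn_integral_eq_integral) auto
  moreover have "(\<integral>\<^sup>+ s. ennreal (H s) \<partial>lborel) = 1"
  proof -
    define k where "k = - (t powr \<sigma> / c)"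
    have k: "k \<noteq> 0" using t c by (simp add: k_def)
    have "(\<integral>\<^sup>+ s. ennreal (H s) \<partial>lborel) = ennreal \<bar>k\<bar> * (\<integral>\<^sup>+ s. ennreal (H (x$3 + k * s)) \<partial>lborel)"
      by (rule nn_integral_real_affine[OF _ k]) (simp add: H_def)
    also have "(\<lambda>s. ennreal (H (x$3 + k * s))) = (\<lambda>s. ennreal (c * t powr (-\<sigma>)) * ennreal ((\<phi> s)^2))"
      using c t by (simp add: H_def k_def ennreal_mult' powr_minus)
    also have "ennreal \<bar>k\<bar> * (\<integral>\<^sup>+ s. ennreal (c * t powr (-\<sigma>)) * ennreal ((\<phi> s)^2) \<partial>lborel) = ennreal (\<bar>k\<bar> * (c * t powr (-\<sigma>)))"
      using c t by (simp add: nn_integral_cmult phin ennreal_mult')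
    also have "\<bar>k\<bar> * (c * t powr (-\<sigma>)) = 1" using c t by (simp add: k_def powr_minus)
    finally show ?thesis by simp
  qed
  ultimately show ?thesis by (simp add: nd1)
qed



lemma norm3: "norm (z::real^3) = sqrt ((z$1)^2 + (z$2)^2 + (z$3)^2)"
  by (simp add: norm_vec_def L2_set_def sum_3)

lemma perp_scale: "a \<ge> 0 \<Longrightarrow> perp_norm (aniso_scale a c y) = a * perp_norm y"
  unfolding perp_norm_def by (simp add: power_mult_distrib real_sqrt_mult flip: distrib_left)

lemma pnorm2_pos: "\<beta> > 0 \<Longrightarrow> p \<noteq> 0 \<or> q \<noteq> 0 \<Longrightarrow> pnorm2 \<beta> p q > 0"
proof -
  assume b: "\<beta> > 0" and pq: "p \<noteq> 0 \<or> q \<noteq> 0"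
  have "\<bar>p\<bar> powr (2/\<beta>) + \<bar>q\<bar> powr (2/\<beta>) > 0"
  proof (cases "p = 0")
    case True
    then have "\<bar>q\<bar> powr (2/\<beta>) > 0" using pq by simp
    then show ?thesis by (simp add: add_nonneg_pos)
  next
    case False
    then have "\<bar>p\<bar> powr (2/\<beta>) > 0" by simp
    then show ?thesis by (simp add: add_pos_nonneg)
  qed
  then show ?thesis unfolding pnorm2_def by simp
qed

lemma pnorm2_nonneg: "pnorm2 \<beta> p q \<ge> 0"
  unfolding pnorm2_def by simp
lemma pnorm2_homog:
  assumes "t > 0" "p \<ge> 0" "q \<ge> 0" "\<beta> > 0"
  shows "pnorm2 \<beta> (t*p) (t*q) = t * pnorm2 \<beta> p q"
proof -
  have "pnorm2 \<beta> (t*p) (t*q) = (t powr (2/\<beta>) * (p powr (2/\<beta>) + q powr (2/\<beta>))) powr (\<beta>/2)"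
    unfolding pnorm2_def using assms by (simp add: abs_mult powr_mult distrib_left)
  also have "\<dots> = (t powr (2/\<beta>)) powr (\<beta>/2) * (p powr (2/\<beta>) + q powr (2/\<beta>)) powr (\<beta>/2)"
    by (rule powr_mult; auto)
  also have "(t powr (2/\<beta>)) powr (\<beta>/2) = t" using assms by (simp add: powr_powr)
  finally show ?thesis unfolding pnorm2_def using assms by simp
qed
lemma norm_scale_ge:
  assumes "0 \<le> m" "m \<le> a" "m \<le> c"
  shows "m * norm y \<le> norm (aniso_scale a c y)"
proof -
  have m1: "m^2 \<le> a^2" using power_mono[OF assms(2) assms(1), of 2] .
  have m2: "m^2 \<le> c^2" using power_mono[OF assms(3) assms(1), of 2] .
  have h: "m^2 * ((y$1)^2 + (y$2)^2 + (y$3)^2) \<le> a^2 * (y$1)^2 + a^2 * (y$2)^2 + c^2 * (y$3)^2"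
    unfolding distrib_left
    by (intro add_mono mult_right_mono m1 m2 zero_le_power2)
  have e1: "(norm (aniso_scale a c y))^2 = a^2 * (y$1)^2 + a^2 * (y$2)^2 + c^2 * (y$3)^2"
    unfolding norm3 by (simp add: power_mult_distrib)
  have e2: "(m * norm y)^2 = m^2 * ((y$1)^2 + (y$2)^2 + (y$3)^2)"
    unfolding norm3 by (simp add: power_mult_distrib)
  have "(m * norm y)^2 \<le> (norm (aniso_scale a c y))^2" unfolding e1 e2 using h .
  then show ?thesis by (rule power2_le_imp_le) simp
qed

lemma aniso_meas[measurable]: "aniso_scale a c \<in> borel_measurable borel"
proof -
  have "aniso_scale a c = (\<lambda>x. \<chi> i. if i = 3 then c * x$i else a * x$i)"
    by (simp add: aniso_scale_def[abs_def])
  also have "\<dots> \<in> borel_measurable borel"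
    apply (intro borel_measurable_continuous_onI continuous_on_vec_lambda)
    subgoal for i by (cases "i = 3") (auto intro!: continuous_intros)
    done
  finally show ?thesis .
qed

definition Pf :: "real \<Rightarrow> real \<Rightarrow> real \<Rightarrow> real^3 \<Rightarrow> real" where
  "Pf \<alpha> \<beta> \<gamma> y = pnorm2 \<beta> ((perp_norm y) powr \<alpha>) (\<bar>y$3\<bar> powr \<gamma>)"

lemma perp_nonneg: "perp_norm y \<ge> 0"
  unfolding perp_norm_def by simp

lemma Pf_pos:
  assumes "\<beta> > 0" "y \<noteq> 0"
  shows "Pf \<alpha> \<beta> \<gamma> y > 0"
proof -
  have "perp_norm y \<noteq> 0 \<or> y$3 \<noteq> 0"
  proof (rule ccontr)
    assume "\<not> ?thesis"
    then have "y$1 = 0" "y$2 = 0" "y$3 = 0" unfolding perp_norm_def by (auto simp: add_nonneg_eq_0_iff)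
    then have "y = 0" by (simp add: vec_eq_iff forall_3)
    with assms show False by simp
  qed
  then show ?thesis unfolding Pf_def using assms perp_nonneg[of y]
    by (intro pnorm2_pos) auto
qed

lemma u_eq:
  assumes "\<beta> > 0"
  shows "u_lim g \<alpha> \<beta> \<gamma> y = g / Pf \<alpha> \<beta> \<gamma> y"
proof -
  have e1: "\<bar>perp_norm y powr \<alpha>\<bar> powr (2/\<beta>) = perp_norm y powr (2*\<alpha>/\<beta>)"
    using perp_nonneg[of y] by (simp add: powr_powr mult.commute)
  have e2: "\<bar>\<bar>y$3\<bar> powr \<gamma>\<bar> powr (2/\<beta>) = \<bar>y$3\<bar> powr (2*\<gamma>/\<beta>)"
    by (simp add: powr_powr mult.commute)
  show ?thesis unfolding u_lim_def Pf_def pnorm2_def e1 e2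
    by (simp add: powr_minus_divide)
qed

lemma Pf_scale:
  assumes t: "t > 0" and a: "\<alpha> > 0" and c: "\<gamma> > 0" and b: "\<beta> > 0"
  shows "Pf \<alpha> \<beta> \<gamma> (aniso_scale (t powr (1/\<alpha>)) (t powr (1/\<gamma>)) y) = t * Pf \<alpha> \<beta> \<gamma> y"
proof -
  have e1: "perp_norm (aniso_scale (t powr (1/\<alpha>)) (t powr (1/\<gamma>)) y) powr \<alpha> = t * perp_norm y powr \<alpha>"
    using a t perp_nonneg[of y] by (simp add: perp_scale powr_mult powr_powr)
  have e2: "\<bar>aniso_scale (t powr (1/\<alpha>)) (t powr (1/\<gamma>)) y $ 3\<bar> powr \<gamma> = t * \<bar>y$3\<bar> powr \<gamma>"
    using c t by (simp add: abs_mult powr_mult powr_powr)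
  show ?thesis unfolding Pf_def e1 e2 using t perp_nonneg[of y]
    by (intro pnorm2_homog) (auto simp: b)
qed

lemma Pf_cont:
  assumes "\<alpha> > 0" "\<beta> > 0" "\<gamma> > 0"
  shows "isCont (Pf \<alpha> \<beta> \<gamma>) x"
  unfolding isCont_def Pf_def[abs_def] pnorm2_def perp_norm_def
  using assms
  by (intro tendsto_powr' tendsto_intros) (auto intro!: always_eventually)


lemma lim_pow: "q > 0 \<Longrightarrow> filterlim (\<lambda>t::real. t powr q) at_top at_top"
  by real_asymp

lemma lim_exp: "k > 0 \<Longrightarrow> q > 0 \<Longrightarrow> ((\<lambda>t::real. t powr p * exp (-k * t powr q)) \<longlongrightarrow> 0) at_top"
  by real_asymp

lemma vec_nth_meas[measurable]: "(\<lambda>y::real^3. y$i) \<in> borel_measurable borel"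
  by (intro borel_measurable_continuous_onI continuous_intros)


theorem lemma1:
  fixes B g \<alpha> \<beta> \<gamma> \<sigma> :: real
    and U :: "real^3 \<Rightarrow> real"
    and \<phi> :: "real \<Rightarrow> real"
    and x :: "real^3"
  assumes "B > 0"
    and U_nonneg: "\<And>y. U y \<ge> 0"
    and U_L1: "integrable lborel U"
    and U_L2: "integrable lborel (\<lambda>y. (U y)^2)"
    and "g > 0" and "\<alpha> > 2" and "\<beta> > 0"
    and "\<alpha> / (\<alpha> - 2) < \<gamma>" and "\<gamma> < 3 * \<alpha> / (\<alpha> - 2)"
    and U_lim: "((\<lambda>y. pnorm2 \<beta> ((perp_norm y) powr \<alpha>) (\<bar>y$3\<bar> powr \<gamma>) * U y) \<longlongrightarrow> g) at_infinity"
    and phi_smooth: "smooth_real \<phi>"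
    and phi_supp: "compact_support \<phi>"
    and phi_norm: "(\<integral>s. (\<phi> s)^2 \<partial>lborel) = 1"
    and phi_center: "(\<integral>s. s * (\<phi> s)^2 \<partial>lborel) = 0"
    and "0 \<le> \<sigma>" and "\<sigma> < 1 / \<gamma>"
    and "x \<noteq> 0"
  shows "Limsup at_top (\<lambda>t. ereal (t * (\<integral>y. delta \<alpha> \<gamma> B \<sigma> \<phi> t (x - y)
            * U (aniso_scale (t powr (1/\<alpha>)) (t powr (1/\<gamma>)) y) \<partial>lborel)))
         \<le> ereal (u_lim g \<alpha> \<beta> \<gamma> x)"
proof -
  have B: "B > 0" and g: "g > 0" and be: "\<beta> > 0" by fact+
  have al: "\<alpha> > 0" using \<open>\<alpha> > 2\<close> by simp
  have ga: "\<gamma> > 0"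
  proof -
    have "\<alpha> / (\<alpha> - 2) > 0" using \<open>\<alpha> > 2\<close> by simp
    then show ?thesis using \<open>\<alpha> / (\<alpha> - 2) < \<gamma>\<close> by linarith
  qed
  have sig: "1/\<gamma> - \<sigma> > 0" using \<open>\<sigma> < 1 / \<gamma>\<close> by simp
  have x0: "norm x > 0" using \<open>x \<noteq> 0\<close> by simp
  have phicont: "continuous_on UNIV \<phi>"
  proof -
    have "\<phi> differentiable (at s)" for s
    proof -
      have "((deriv ^^ 0) \<phi>) differentiable (at s)" using phi_smooth unfolding smooth_real_def by blast
      then show ?thesis by simp
    qed
    then show ?thesis
      by (auto intro: differentiable_imp_continuous_within simp: continuous_on_eq_continuous_within)
  qed
  have phim[measurable]: "\<phi> \<in> borel_measurable borel"
    using borel_measurable_continuous_onI[OF phicont] .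
  obtain L where L: "L > 0" "\<And>s. \<bar>s\<bar> > L \<Longrightarrow> \<phi> s = 0"
  proof -
    have "bounded (closure {s. \<phi> s \<noteq> 0})"
      using phi_supp compact_imp_bounded unfolding compact_support_def by blast
    then obtain L0 where L0: "\<forall>s\<in>closure {s. \<phi> s \<noteq> 0}. norm s \<le> L0"
      unfolding bounded_iff by blast
    have "\<phi> s = 0" if "\<bar>s\<bar> > max L0 1" for s
    proof (rule ccontr)
      assume "\<phi> s \<noteq> 0"
      then have "s \<in> closure {s. \<phi> s \<noteq> 0}" using closure_subset[of "{s. \<phi> s \<noteq> 0}"] by auto
      then have "norm s \<le> L0" using L0 by blast
      then show False using that by simp
    qed
    then show ?thesis using that[of "max L0 1"] by simp
  qed
  obtain M where M: "M \<ge> 0" "\<And>s. \<bar>\<phi> s\<bar> \<le> M"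
  proof -
    have "compact (\<phi> ` cball 0 L)"
      by (intro compact_continuous_image continuous_on_subset[OF phicont]) auto
    then have "bounded (\<phi> ` cball 0 L)" by (rule compact_imp_bounded)
    then obtain M0 where M0: "\<forall>v\<in>\<phi> ` cball 0 L. norm v \<le> M0"
      unfolding bounded_iff by blast
    have "\<bar>\<phi> s\<bar> \<le> max M0 0" for s
    proof (cases "\<bar>s\<bar> \<le> L")
      case True
      then show ?thesis using M0 by force
    next
      case False
      then show ?thesis using L(2)[of s] by simp
    qed
    then show ?thesis using that[of "max M0 0"] by simp
  qed
  have phin: "(\<integral>\<^sup>+s. ennreal ((\<phi> s)^2) \<partial>lborel) = 1"
  proof -
    have "integrable lborel (\<lambda>s. (\<phi> s)^2)"
    proof (rule ccontr)
      assume "\<not> integrable lborel (\<lambda>s. (\<phi> s)^2)"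
      then have "(\<integral>s. (\<phi> s)^2 \<partial>lborel) = 0" by (rule not_integrable_integral_eq)
      then show False using phi_norm by simp
    qed
    then show ?thesis using phi_norm by (subst nn_integral_eq_integral) auto
  qed
  have Um[measurable]: "U \<in> borel_measurable borel"
    using borel_measurable_integrable[OF U_L1] by simp
  define IU where "IU = (\<integral>y. U y \<partial>lborel)"
  have IU0: "IU \<ge> 0" unfolding IU_def using U_nonneg by (simp add: integral_nonneg_AE)
  have IU: "(\<integral>\<^sup>+y. ennreal (U y) \<partial>lborel) = ennreal IU"
    unfolding IU_def using U_L1 U_nonneg by (subst nn_integral_eq_integral) auto
  define P where "P = Pf \<alpha> \<beta> \<gamma>"
  have Px: "P x > 0" unfolding P_def using Pf_pos be \<open>x \<noteq> 0\<close> by blast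
  have u0: "u_lim g \<alpha> \<beta> \<gamma> x = g / P x" unfolding P_def using u_eq be by blast
  have Plim: "\<forall>\<eta>>0. \<exists>R. \<forall>z. norm z \<ge> R \<longrightarrow> dist (P z * U z) g < \<eta>"
    using U_lim unfolding Lim_at_infinity P_def Pf_def by simp
  have main: "eventually (\<lambda>t. t * (\<integral>y. delta \<alpha> \<gamma> B \<sigma> \<phi> t (x - y)
            * U (aniso_scale (t powr (1/\<alpha>)) (t powr (1/\<gamma>)) y) \<partial>lborel) \<le> g / P x + \<epsilon>) at_top"
    if \<epsilon>: "\<epsilon> > 0" for \<epsilon>
  proof -
    define \<eta> where "\<eta> = \<epsilon> * P x / 4"
    have \<eta>: "\<eta> > 0" unfolding \<eta>_def using \<epsilon> Px by simp
    define \<epsilon>1 where "\<epsilon>1 = \<epsilon> / (4 * (g + \<eta>))"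
    have \<epsilon>1: "\<epsilon>1 > 0" unfolding \<epsilon>1_def using \<epsilon> \<eta> g by simp
    define K where "K = (g + \<eta>) * (1 / P x + \<epsilon>1)"
    have K0: "K \<ge> 0" unfolding K_def using \<eta> g \<epsilon>1 Px by simp
    have K: "K \<le> g / P x + \<epsilon>/2"
    proof -
      have "K = g / P x + \<eta> / P x + (g + \<eta>) * \<epsilon>1" unfolding K_def by (simp add: algebra_simps add_divide_distrib)
      also have "\<eta> / P x = \<epsilon>/4" unfolding \<eta>_def using Px by simp
      also have "(g + \<eta>) * \<epsilon>1 = \<epsilon>/4" unfolding \<epsilon>1_def using g \<eta> by (simp add: field_simps)
      finally show ?thesis by simp
    qed
    obtain r1 where r1: "r1 > 0" "\<And>y. dist y x < r1 \<Longrightarrow> dist (1 / P y) (1 / P x) < \<epsilon>1"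
    proof -
      have "isCont (\<lambda>y. 1 / P y) x"
        unfolding P_def using Pf_cont[OF al be ga] Px unfolding P_def by (intro continuous_intros) auto
      then show ?thesis using that \<epsilon>1 unfolding continuous_at_eps_delta by blast
    qed
    define r where "r = min r1 (norm x / 2)"
    have r: "r > 0" "r \<le> r1" "r \<le> norm x / 2" unfolding r_def using r1 x0 by auto
    obtain R where R: "R \<ge> 1" "\<And>z. norm z \<ge> R \<Longrightarrow> dist (P z * U z) g < \<eta>"
    proof -
      obtain R0 where "\<forall>z. norm z \<ge> R0 \<longrightarrow> dist (P z * U z) g < \<eta>" using Plim \<eta> by blast
      then show ?thesis using that[of "max R0 1"] by simp
    qed
    define Q where "Q = 2 * R / norm x"
    have Q: "Q > 0" unfolding Q_def using R x0 by simp
    define C where "C = B / (2*pi) * M^2 * IU"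
    have ev1: "eventually (\<lambda>t::real. t > 0) at_top" by (rule eventually_gt_at_top)
    have ev2: "eventually (\<lambda>t. t powr (1/\<alpha>) \<ge> Q) at_top"
      using lim_pow[of "1/\<alpha>"] al unfolding filterlim_at_top by simp
    have ev3: "eventually (\<lambda>t. t powr (1/\<gamma>) \<ge> Q) at_top"
      using lim_pow[of "1/\<gamma>"] ga unfolding filterlim_at_top by simp
    have ev4: "eventually (\<lambda>t. t powr (1/\<gamma> - \<sigma>) \<ge> 2 * L / r + 1) at_top"
      using lim_pow[OF sig] unfolding filterlim_at_top by simp
    have ev5: "eventually (\<lambda>t. t powr (1-\<sigma>) * exp (-(B*r^2/8) * t powr (2/\<alpha>)) * C < \<epsilon>/2) at_top"
    proof -
      have "((\<lambda>t. t powr (1-\<sigma>) * exp (-(B*r^2/8) * t powr (2/\<alpha>))) \<longlongrightarrow> 0) at_top"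
        using B r al by (intro lim_exp) auto
      then have "((\<lambda>t. t powr (1-\<sigma>) * exp (-(B*r^2/8) * t powr (2/\<alpha>)) * C) \<longlongrightarrow> 0) at_top"
        by (rule tendsto_mult_left_zero)
      then show ?thesis using \<epsilon> by (intro order_tendstoD(2)) auto
    qed
    show ?thesis using ev1 ev2 ev3 ev4 ev5
    proof eventually_elim
      case (elim t)
      have t: "t > 0" using elim by simp
      define a where "a = t powr (1/\<alpha>)"
      define c where "c = t powr (1/\<gamma>)"
      define a2 where "a2 = t powr (2/\<alpha>)"
      have a: "a > 0" "Q \<le> a" using elim t by (auto simp: a_def)
      have c: "c > 0" "Q \<le> c" using elim t by (auto simp: c_def)
      have a2: "a2 = a * a" "a2 > 0" unfolding a2_def a_def using t by (auto simp: powr_add[symmetric])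
      define S where "S = aniso_scale a c"
      define D where "D = a2 * c * (B/(2*pi)) * exp (-(B/2) * a2 * (r^2/4)) * t powr (-\<sigma>) * M^2"
      have D0: "D \<ge> 0" unfolding D_def using a2 c B M by simp
      have dnn: "delta \<alpha> \<gamma> B \<sigma> \<phi> t z \<ge> 0" for z unfolding delta_def by simp
      have deq: "delta \<alpha> \<gamma> B \<sigma> \<phi> t z = a2 * c * (B/(2*pi)) * exp (-(B/2) * a2 * ((z$1)^2 + (z$2)^2))
          * t powr (-\<sigma>) * (\<phi> (c * z$3 / t powr \<sigma>))^2" for z
        unfolding delta_eq[OF t B] a2_def c_def ..
      have pw: "delta \<alpha> \<gamma> B \<sigma> \<phi> t (x - y) * U (S y) \<le> delta \<alpha> \<gamma> B \<sigma> \<phi> t (x - y) * (K/t) + D * U (S y)" for y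
      proof (cases "dist y x < r")
        case True
        have "norm x - norm y \<le> norm (x - y)" by (rule norm_triangle_ineq2)
        also have "norm (x - y) = dist y x" by (simp add: dist_norm norm_minus_commute)
        finally have ny: "norm y \<ge> norm x / 2" using True r by linarith
        then have y0: "y \<noteq> 0" using x0 by auto
        have "Q * norm y \<le> norm (S y)" unfolding S_def using a c Q by (intro norm_scale_ge) auto
        moreover have "Q * (norm x / 2) = R" unfolding Q_def using x0 by simp
        moreover have "Q * (norm x / 2) \<le> Q * norm y" using ny Q by (intro mult_left_mono) auto
        ultimately have "norm (S y) \<ge> R" by linarith
        then have "dist (P (S y) * U (S y)) g < \<eta>" by (rule R(2))
        moreover have "P (S y) = t * P y" unfolding P_def S_def a_def c_def using Pf_scale[OF t al ga be] by blast
        ultimately have h1: "t * P y * U (S y) < g + \<eta>" by (simp add: dist_real_def abs_less_iff)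
        have Py: "P y > 0" unfolding P_def using Pf_pos[OF be y0] .
        have "dist (1 / P y) (1 / P x) < \<epsilon>1" using r1(2) True r by simp
        then have h2: "1 / P y < 1 / P x + \<epsilon>1" by (simp add: dist_real_def abs_less_iff)
        have "t * U (S y) < (g + \<eta>) / P y" using h1 Py by (simp add: field_simps mult.commute mult.left_commute)
        also have "(g + \<eta>) / P y = (g + \<eta>) * (1 / P y)" by simp
        also have "\<dots> \<le> (g + \<eta>) * (1 / P x + \<epsilon>1)" using h2 g \<eta> by (intro mult_left_mono) auto
        finally have "t * U (S y) \<le> K" unfolding K_def by simp
        then have "U (S y) \<le> K / t" using t by (simp add: field_simps)
        then have "delta \<alpha> \<gamma> B \<sigma> \<phi> t (x - y) * U (S y) \<le> delta \<alpha> \<gamma> B \<sigma> \<phi> t (x - y) * (K/t)"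
          using dnn by (intro mult_left_mono) auto
        moreover have "D * U (S y) \<ge> 0" using D0 U_nonneg by simp
        ultimately show ?thesis by linarith
      next
        case False
        define z where "z = x - y"
        have nz: "norm z \<ge> r" using False by (simp add: z_def dist_norm norm_minus_commute)
        have "delta \<alpha> \<gamma> B \<sigma> \<phi> t z \<le> D"
        proof (cases "\<bar>z$3\<bar> \<ge> r/2")
          case True
          have "c / t powr \<sigma> = t powr (1/\<gamma> - \<sigma>)" unfolding c_def by (simp add: powr_diff)
          moreover have "\<bar>c * z$3 / t powr \<sigma>\<bar> = (c / t powr \<sigma>) * \<bar>z$3\<bar>" using c t
            by (simp add: abs_mult)
          ultimately have eq: "\<bar>c * z$3 / t powr \<sigma>\<bar> = t powr (1/\<gamma> - \<sigma>) * \<bar>z$3\<bar>" by simp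
          have "(2 * L / r + 1) * (r/2) \<le> t powr (1/\<gamma> - \<sigma>) * \<bar>z$3\<bar>" using elim True r L
            by (intro mult_mono) auto
          moreover have "(2 * L / r + 1) * (r/2) = L + r/2" using r by (simp add: field_simps)
          ultimately have "\<bar>c * z$3 / t powr \<sigma>\<bar> > L" using eq r by linarith
          then have "\<phi> (c * z$3 / t powr \<sigma>) = 0" by (rule L(2))
          then show ?thesis unfolding deq using D0 by simp
        next
          case False
          have n2: "(norm z)^2 = (z$1)^2 + (z$2)^2 + (z$3)^2" unfolding norm3 by simp
          have "r^2 \<le> (norm z)^2" using nz r by (intro power_mono) auto
          moreover have "\<bar>z$3\<bar>^2 < (r/2)^2" using False r by (intro power_strict_mono) auto
          ultimately have zz: "(z$1)^2 + (z$2)^2 \<ge> r^2/4" unfolding n2 by (simp add: power_divide, insert zero_le_power2[of r], linarith)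
          have "(B/2) * a2 * (r^2/4) \<le> (B/2) * a2 * ((z$1)^2 + (z$2)^2)"
            using zz B a2 by (intro mult_left_mono) auto
          then have e: "exp (-(B/2) * a2 * ((z$1)^2 + (z$2)^2)) \<le> exp (-(B/2) * a2 * (r^2/4))" by simp
          have "\<bar>\<phi> (c * z$3 / t powr \<sigma>)\<bar>^2 \<le> M^2" using M by (intro power_mono) auto
          then have f: "(\<phi> (c * z$3 / t powr \<sigma>))^2 \<le> M^2" by simp
          show ?thesis unfolding deq D_def using e f a2 c B
            by (intro mult_mono) auto
        qed
        then have "delta \<alpha> \<gamma> B \<sigma> \<phi> t (x - y) * U (S y) \<le> D * U (S y)"
          unfolding z_def using U_nonneg by (intro mult_right_mono) auto
        moreover have "delta \<alpha> \<gamma> B \<sigma> \<phi> t (x - y) * (K/t) \<ge> 0" using dnn K0 t by simp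
        ultimately show ?thesis by linarith
      qed
      have md[measurable]: "(\<lambda>y. delta \<alpha> \<gamma> B \<sigma> \<phi> t (x - y)) \<in> borel_measurable borel"
        unfolding deq by measurable
      have mU[measurable]: "(\<lambda>y. U (S y)) \<in> borel_measurable borel" unfolding S_def by measurable
      have nnS: "(\<integral>\<^sup>+y. ennreal (U (S y)) \<partial>lborel) = ennreal (IU / (a2 * c))"
      proof -
        have h: "ennreal IU = ennreal (a2 * c) * (\<integral>\<^sup>+y. ennreal (U (S y)) \<partial>lborel)"
          using nn_scale3[OF Um a(1) c(1)] IU unfolding S_def a2(1) by simp
        have "ennreal (IU / (a2 * c)) = ennreal (1 / (a2 * c)) * ennreal IU"
          using a2 c IU0 by (simp add: ennreal_mult[symmetric])
        also have "\<dots> = ennreal (1/(a2*c)) * ennreal (a2*c) * (\<integral>\<^sup>+y. ennreal (U (S y)) \<partial>lborel)"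
          unfolding h by (simp add: mult.assoc)
        also have "ennreal (1/(a2*c)) * ennreal (a2*c) = 1" using a2 a c by (simp add: ennreal_mult[symmetric])
        finally show ?thesis by simp
      qed
      have nnb: "(\<integral>\<^sup>+y. ennreal (delta \<alpha> \<gamma> B \<sigma> \<phi> t (x - y) * U (S y)) \<partial>lborel) \<le> ennreal (K/t + D * (IU / (a2 * c)))"
      proof -
        have "(\<integral>\<^sup>+y. ennreal (delta \<alpha> \<gamma> B \<sigma> \<phi> t (x - y) * U (S y)) \<partial>lborel)
            \<le> (\<integral>\<^sup>+y. ennreal (K/t) * ennreal (delta \<alpha> \<gamma> B \<sigma> \<phi> t (x - y)) + ennreal D * ennreal (U (S y)) \<partial>lborel)"
        proof (rule nn_integral_mono)
          fix y
          have "ennreal (delta \<alpha> \<gamma> B \<sigma> \<phi> t (x - y) * U (S y)) \<le> ennreal (delta \<alpha> \<gamma> B \<sigma> \<phi> t (x - y) * (K/t) + D * U (S y))"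
            using pw[of y] by (rule ennreal_leI)
          also have "\<dots> = ennreal (delta \<alpha> \<gamma> B \<sigma> \<phi> t (x - y) * (K/t)) + ennreal (D * U (S y))"
            using dnn K0 t D0 U_nonneg by (intro ennreal_plus) auto
          also have "ennreal (delta \<alpha> \<gamma> B \<sigma> \<phi> t (x - y) * (K/t)) = ennreal (K/t) * ennreal (delta \<alpha> \<gamma> B \<sigma> \<phi> t (x - y))"
            using dnn[of "x - y"] K0 t by (subst mult.commute, intro ennreal_mult) auto
          also have "ennreal (D * U (S y)) = ennreal D * ennreal (U (S y))"
            using D0 U_nonneg by (simp add: ennreal_mult)
          finally show "ennreal (delta \<alpha> \<gamma> B \<sigma> \<phi> t (x - y) * U (S y)) \<le> ennreal (K/t) * ennreal (delta \<alpha> \<gamma> B \<sigma> \<phi> t (x - y)) + ennreal D * ennreal (U (S y))" .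
        qed
        also have "\<dots> = ennreal (K/t) * (\<integral>\<^sup>+y. ennreal (delta \<alpha> \<gamma> B \<sigma> \<phi> t (x - y)) \<partial>lborel) + ennreal D * (\<integral>\<^sup>+ y. ennreal (U (S y)) \<partial>lborel)"
          by (simp add: nn_integral_add nn_integral_cmult)
        also have "\<dots> = ennreal (K/t) + ennreal (D * (IU/(a2*c)))"
        proof -
          have m: "ennreal D * ennreal (IU/(a2*c)) = ennreal (D*(IU/(a2*c)))"
            using D0 IU0 a2 c by (intro ennreal_mult[symmetric]) auto
          show ?thesis unfolding mass[OF t B phim phin] nnS m by simp
        qed
        also have "\<dots> = ennreal (K/t + D * (IU/(a2*c)))"
          using K0 t D0 IU0 a2 c by (intro ennreal_plus[symmetric]) auto
        finally show ?thesis .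
      qed
      have "(\<integral>y. delta \<alpha> \<gamma> B \<sigma> \<phi> t (x - y) * U (S y) \<partial>lborel) \<le> K/t + D * (IU / (a2 * c))"
      proof -
        have "(\<integral>y. delta \<alpha> \<gamma> B \<sigma> \<phi> t (x - y) * U (S y) \<partial>lborel) = enn2real (\<integral>\<^sup>+y. ennreal (delta \<alpha> \<gamma> B \<sigma> \<phi> t (x - y) * U (S y)) \<partial>lborel)"
          by (rule integral_eq_nn_integral) (auto simp: dnn U_nonneg)
        also have "\<dots> \<le> K/t + D * (IU / (a2 * c))"
          using nnb K0 t D0 IU0 a2 c by (intro enn2real_leI) auto
        finally show ?thesis .
      qed
      then have "t * (\<integral>y. delta \<alpha> \<gamma> B \<sigma> \<phi> t (x - y) * U (S y) \<partial>lborel) \<le> K + t * (D * (IU / (a2 * c)))"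
        using t by (simp add: field_simps mult_left_mono)
      also have "t * (D * (IU / (a2 * c))) = t powr (1-\<sigma>) * exp (-(B*r^2/8) * t powr (2/\<alpha>)) * C"
      proof -
        have tt: "t * t powr (-\<sigma>) = t powr (1-\<sigma>)" using t by (simp add: powr_diff powr_minus field_simps)
        have ee: "-(B/2) * a2 * (r^2/4) = -(B*r^2/8) * t powr (2/\<alpha>)" unfolding a2_def by (simp add: field_simps)
        have "t * (D * (IU/(a2*c))) = (t * t powr (-\<sigma>)) * exp (-(B/2) * a2 * (r^2/4)) * C"
          unfolding D_def C_def using a2 a c by (simp add: field_simps)
        then show ?thesis by (simp only: tt ee)
      qed
      finally have "t * (\<integral>y. delta \<alpha> \<gamma> B \<sigma> \<phi> t (x - y) * U (S y) \<partial>lborel) \<le> g / P x + \<epsilon>"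
        using K elim by linarith
      then show ?case unfolding S_def a_def c_def .
    qed
  qed
  show ?thesis
    unfolding u0
  proof (rule ereal_le_epsilon2, rule Limsup_bounded)
    fix e :: real assume "0 < e"
    from main[OF this] show "\<forall>\<^sub>F t in at_top. ereal (t * (\<integral>y. delta \<alpha> \<gamma> B \<sigma> \<phi> t (x - y)
            * U (aniso_scale (t powr (1/\<alpha>)) (t powr (1/\<gamma>)) y) \<partial>lborel)) \<le> ereal (g / P x) + ereal e"
      by (rule eventually_mono) simp
  qed
qed

end
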